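(* Let $(X,\mathscr{A},\mu)$ be a $\sigma$-finite measure space, $\phi$ a nonsingular transformation of $X$ with $0<\mathsf{h}_\phi<\infty$ a.e. $[\mu]$, and $P\colon X\times\mathfrak{B}(\mathbb{R}_+)\to[0,1]$ an $\mathscr{A}$-measurable family of probability measures satisfying (CC): $\mathsf{E}(P(\cdot,\sigma))(x)=\dfrac{\int_\sigma t\,P(\phi(x),\mathrm{d}t)}{\mathsf{h}_\phi(\phi(x))}$ for $\mu$-a.e. $x\in X$, for every $\sigma\in\mathfrak{B}(\mathbb{R}_+)$. Then for every $n\in\mathbb{Z}_+$, $\mathsf{h}_{\phi^n}(x)=\int_0^\infty t^n\,P(x,\mathrm{d}t)$ for $\mu$-a.e. $x\in X$. Moreover, if $C_\phi^n$ is densely defined for every $n\in\mathbb{Z}_+$, then for $\mu$-a.e. $x\in X$ the sequence $\{\mathsf{h}_{\phi^n}(x)\}_{n=0}^\infty$ is a Stieltjes moment sequence with representing measure $P(x,\cdot)$.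
   Context: $\mathbb{R}_+=[0,\infty)$, $\mathbb{Z}_+=\{0,1,2,\dots\}$. Conventions: $0\cdot\infty=0$, $1/0=\infty$, $0/0=1$. Nonsingular transformation: $\phi^{-1}(\Delta)\in\mathscr{A}$ for $\Delta\in\mathscr{A}$ and $\mu(\phi^{-1}(\Delta))=0$ when $\mu(\Delta)=0$. $\phi^n$ is the $n$-fold composition ($\phi^0=\mathrm{id}_X$), and $\mathsf{h}_{\phi^n}$ is the Radon–Nikodym derivative of $\Delta\mapsto\mu((\phi^n)^{-1}(\Delta))$ w.r.t. $\mu$. $C_\phi f=f\circ\phi$ on $\{f\in L^2(\mu):f\circ\phi\in L^2(\mu)\}$. $\mathsf{E}(f)$ is the conditional expectation of an $\mathscr{A}$-measurable $f\colon X\to[0,\infty]$ w.r.t. $\phi^{-1}(\mathscr{A})$: the a.e. unique $\phi^{-1}(\mathscr{A})$-measurable function with $\int(g\circ\phi)f\,\mathrm{d}\mu=\int(g\circ\phi)\mathsf{E}(f)\,\mathrm{d}\mu$ for every $\mathscr{A}$-measurable $g\ge0$. An $\mathscr{A}$-measurable family of probability measures: each $P(x,\cdot)$ a Borel probability measure on $\mathbb{R}_+$, each $P(\cdot,\sigma)$ $\mathscr{A}$-measurable. A sequence $\{a_n\}_{n\ge0}$ is a Stieltjes moment sequence with representing measure $\nu$ if $\nu$ is a Borel measure on $\mathbb{R}_+$ with $a_n=\int_0^\infty s^n\nu(\mathrm{d}s)$ for all $n$. *)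

theory Defs
  imports "HOL-Probability.Probability"
begin

definition nonsingular :: "'a measure \<Rightarrow> ('a \<Rightarrow> 'a) \<Rightarrow> bool" where
  "nonsingular M \<phi> \<longleftrightarrow> \<phi> \<in> measurable M M \<and>
     (\<forall>A\<in>sets M. emeasure M A = 0 \<longrightarrow> emeasure M (\<phi> -` A \<inter> space M) = 0)"

definition hphi :: "'a measure \<Rightarrow> ('a \<Rightarrow> 'a) \<Rightarrow> nat \<Rightarrow> 'a \<Rightarrow> ennreal" where
  "hphi M \<phi> n = RN_deriv M (distr M M (\<phi> ^^ n))"

definition is_cond_exp_phi :: "'a measure \<Rightarrow> ('a \<Rightarrow> 'a) \<Rightarrow> ('a \<Rightarrow> ennreal) \<Rightarrow> ('a \<Rightarrow> ennreal) \<Rightarrow> bool" where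
  "is_cond_exp_phi M \<phi> f g \<longleftrightarrow>
     g \<in> borel_measurable (vimage_algebra (space M) \<phi> M) \<and>
     (\<forall>u \<in> borel_measurable M.
        (\<integral>\<^sup>+ x. u (\<phi> x) * f x \<partial>M) = (\<integral>\<^sup>+ x. u (\<phi> x) * g x \<partial>M))"

definition cond_exp_phi :: "'a measure \<Rightarrow> ('a \<Rightarrow> 'a) \<Rightarrow> ('a \<Rightarrow> ennreal) \<Rightarrow> 'a \<Rightarrow> ennreal" where
  "cond_exp_phi M \<phi> f = (SOME g. is_cond_exp_phi M \<phi> f g)"

abbreviation borel_Rplus :: "real measure" where
  "borel_Rplus \<equiv> restrict_space borel {0..}"

definition measurable_prob_family :: "'a measure \<Rightarrow> ('a \<Rightarrow> real measure) \<Rightarrow> bool" where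
  "measurable_prob_family M P \<longleftrightarrow>
     (\<forall>x\<in>space M. prob_space (P x) \<and> sets (P x) = sets borel_Rplus) \<and>
     (\<forall>\<sigma>\<in>sets borel_Rplus. (\<lambda>x. emeasure (P x) \<sigma>) \<in> borel_measurable M)"

definition stieltjes_moment_seq :: "(nat \<Rightarrow> real) \<Rightarrow> real measure \<Rightarrow> bool" where
  "stieltjes_moment_seq a \<nu> \<longleftrightarrow> sets \<nu> = sets borel_Rplus \<and>
     (\<forall>n. integrable \<nu> (\<lambda>s. s ^ n) \<and> a n = (\<integral>s. s ^ n \<partial>\<nu>))"

definition sq_int :: "'a measure \<Rightarrow> ('a \<Rightarrow> complex) \<Rightarrow> bool" where
  "sq_int M f \<longleftrightarrow> f \<in> borel_measurable M \<and> integrable M (\<lambda>x. (norm (f x))\<^sup>2)"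

definition dom_Cphi_pow :: "'a measure \<Rightarrow> ('a \<Rightarrow> 'a) \<Rightarrow> nat \<Rightarrow> ('a \<Rightarrow> complex) set" where
  "dom_Cphi_pow M \<phi> n = {f. sq_int M f \<and> (\<forall>k\<le>n. sq_int M (\<lambda>x. f ((\<phi> ^^ k) x)))}"

definition Cphi_pow_densely_defined :: "'a measure \<Rightarrow> ('a \<Rightarrow> 'a) \<Rightarrow> nat \<Rightarrow> bool" where
  "Cphi_pow_densely_defined M \<phi> n \<longleftrightarrow>
     (\<forall>g. sq_int M g \<longrightarrow> (\<forall>\<epsilon>>0. \<exists>f\<in>dom_Cphi_pow M \<phi> n.
        (\<integral>x. (norm (f x - g x))\<^sup>2 \<partial>M) < \<epsilon>))"

end

theory Submission
  imports Defs
begin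


lemma hphi1_density:
  assumes sf: "sigma_finite_measure M" and ns: "nonsingular M \<phi>"
  shows "density M (hphi M \<phi> 1) = distr M M \<phi>"
proof -
  have meas: "\<phi> \<in> measurable M M" using ns unfolding nonsingular_def by auto
  have ac: "absolutely_continuous M (distr M M \<phi>)"
    unfolding absolutely_continuous_def
  proof
    fix A assume "A \<in> null_sets M"
    then show "A \<in> null_sets (distr M M \<phi>)"
      using ns meas by (auto simp: nonsingular_def null_sets_def emeasure_distr)
  qed
  show ?thesis unfolding hphi_def using sigma_finite_measure.density_RN_deriv[OF sf ac] by simp
qed

lemma hphi1_int:
  assumes sf: "sigma_finite_measure M" and ns: "nonsingular M \<phi>"
    and v: "v \<in> borel_measurable M"
  shows "(\<integral>\<^sup>+ x. v (\<phi> x) \<partial>M) = (\<integral>\<^sup>+ y. hphi M \<phi> 1 y * v y \<partial>M)"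
proof -
  have meas: "\<phi> \<in> measurable M M" using ns unfolding nonsingular_def by auto
  have "(\<integral>\<^sup>+ x. v (\<phi> x) \<partial>M) = (\<integral>\<^sup>+ y. v y \<partial>distr M M \<phi>)"
    by (simp add: nn_integral_distr meas v)
  also have "\<dots> = (\<integral>\<^sup>+ y. v y \<partial>density M (hphi M \<phi> 1))"
    using hphi1_density[OF sf ns] by simp
  also have "\<dots> = (\<integral>\<^sup>+ y. hphi M \<phi> 1 y * v y \<partial>M)"
    by (rule nn_integral_density) (auto simp: hphi_def v)
  finally show ?thesis .
qed



lemma vimage_subalg:
  assumes ns: "nonsingular M \<phi>"
  shows "subalgebra M (vimage_algebra (space M) \<phi> M)"
proof -
  have meas: "\<phi> \<in> measurable M M" using ns unfolding nonsingular_def by auto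
  show ?thesis unfolding subalgebra_def
    using meas by (auto simp: sets_vimage_algebra2 measurable_def)
qed

lemma vimage_sigma_finite:
  assumes sf: "sigma_finite_measure M" and ns: "nonsingular M \<phi>"
    and fin: "AE x in M. hphi M \<phi> 1 x < \<infinity>"
  shows "sigma_finite_subalgebra M (vimage_algebra (space M) \<phi> M)"
proof -
  let ?F = "vimage_algebra (space M) \<phi> M"
  let ?h = "hphi M \<phi> 1"
  have meas: "\<phi> \<in> measurable M M" using ns unfolding nonsingular_def by auto
  have sub: "subalgebra M ?F" by (rule vimage_subalg[OF ns])
  have hm[measurable]: "?h \<in> borel_measurable M" by (simp add: hphi_def)
  obtain C where C: "countable C" "C \<subseteq> sets M" "\<Union>C = space M" "\<forall>c\<in>C. emeasure M c \<noteq> \<infinity>"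
    using sigma_finite_measure.sigma_finite_countable[OF sf] by auto
  define H where "H = {y \<in> space M. ?h y = \<infinity>}"
  define B where "B = (\<lambda>(c, j::nat). c \<inter> {y\<in>space M. ?h y \<le> of_nat j})"
  define A where "A = (\<lambda>D. \<phi> -` D \<inter> space M) ` (insert H (B ` (C \<times> UNIV)))"
  have Hs: "H \<in> sets M" unfolding H_def by measurable
  have Bs: "B p \<in> sets M" if pC: "p \<in> C \<times> UNIV" for p
  proof -
    obtain c j where p: "p = (c, j)" "c \<in> C" using pC by auto
    have "{y\<in>space M. ?h y \<le> of_nat j} \<in> sets M" by measurable
    then show ?thesis using p C(2) unfolding B_def by auto
  qed
  have em: "emeasure M (\<phi> -` D \<inter> space M) = (\<integral>\<^sup>+ y. ?h y * indicator D y \<partial>M)" if "D \<in> sets M" for D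
  proof -
    have "emeasure M (\<phi> -` D \<inter> space M) = emeasure (distr M M \<phi>) D"
      using that meas by (simp add: emeasure_distr)
    also have "\<dots> = emeasure (density M ?h) D" using hphi1_density[OF sf ns] by simp
    also have "\<dots> = (\<integral>\<^sup>+ y. ?h y * indicator D y \<partial>M)" using that hm by (simp add: emeasure_density)
    finally show ?thesis .
  qed
  have "sigma_finite_measure (restr_to_subalg M ?F)"
  proof (rule sigma_finite_measure.intro, rule exI[of _ A], intro conjI)
    show "countable A" unfolding A_def using C(1) by auto
    show "A \<subseteq> sets (restr_to_subalg M ?F)"
      unfolding A_def sets_restr_to_subalg[OF sub] using Hs Bs meas
      by (auto simp: sets_vimage_algebra2 in_vimage_algebra)
    show "\<Union>A = space (restr_to_subalg M ?F)"
    proof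
      show "\<Union>A \<subseteq> space (restr_to_subalg M ?F)" unfolding A_def space_restr_to_subalg by auto
      show "space (restr_to_subalg M ?F) \<subseteq> \<Union>A"
      proof
        fix x assume "x \<in> space (restr_to_subalg M ?F)"
        then have x: "x \<in> space M" by (simp add: space_restr_to_subalg)
        then have px: "\<phi> x \<in> space M" using meas by (auto simp: measurable_def)
        show "x \<in> \<Union>A"
        proof (cases "?h (\<phi> x) = \<infinity>")
          case True then show ?thesis unfolding A_def H_def using x px by auto
        next
          case False
          then obtain r where r: "?h (\<phi> x) = ennreal r" "0 \<le> r" by (cases "?h (\<phi> x)") auto
          obtain j :: nat where "r \<le> of_nat j" using real_arch_simple by auto
          then have j: "?h (\<phi> x) \<le> of_nat j" using r by (simp add: ennreal_of_nat_eq_real_of_nat)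
          obtain c where c: "c \<in> C" "\<phi> x \<in> c" using C(3) px by auto
          have "\<phi> x \<in> B (c, j)" unfolding B_def using c j px by auto
          then show ?thesis unfolding A_def using c x by auto
        qed
      qed
    qed
    show "\<forall>a\<in>A. emeasure (restr_to_subalg M ?F) a \<noteq> \<infinity>"
    proof
      fix a assume "a \<in> A"
      then obtain D where D: "D \<in> insert H (B ` (C \<times> UNIV))" "a = \<phi> -` D \<inter> space M"
        unfolding A_def by auto
      have DM: "D \<in> sets M" using D(1) Hs Bs by auto
      have aF: "a \<in> sets ?F" using D DM meas by (auto simp: sets_vimage_algebra2 in_vimage_algebra)
      have ea: "emeasure (restr_to_subalg M ?F) a = (\<integral>\<^sup>+ y. ?h y * indicator D y \<partial>M)"
        using emeasure_restr_to_subalg[OF sub aF] em[OF DM] D(2) by simp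
      show "emeasure (restr_to_subalg M ?F) a \<noteq> \<infinity>"
      proof (cases "D = H")
        case True
        have "(\<integral>\<^sup>+ y. ?h y * indicator D y \<partial>M) = (\<integral>\<^sup>+ y. 0 \<partial>M)"
          by (rule nn_integral_cong_AE) (use fin in \<open>auto simp: True H_def indicator_def\<close>)
        then show ?thesis using ea by simp
      next
        case False
        then obtain c j where cj: "c \<in> C" "D = B (c, j)" using D(1) by auto
        have "(\<integral>\<^sup>+ y. ?h y * indicator D y \<partial>M) \<le> (\<integral>\<^sup>+ y. of_nat j * indicator c y \<partial>M)"
          by (rule nn_integral_mono) (auto simp: cj B_def indicator_def)
        also have "\<dots> = of_nat j * emeasure M c"
          using cj C(2) by (subst nn_integral_cmult_indicator) auto
        also have "\<dots> < \<infinity>" using C(4) cj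
          by (simp add: ennreal_mult_less_top less_top of_nat_less_top)
        finally show ?thesis using ea by simp
      qed
    qed
  qed
  then show ?thesis unfolding sigma_finite_subalgebra_def using sub by auto
qed

lemma cond_exp_phi_prop:
  assumes sf: "sigma_finite_measure M" and ns: "nonsingular M \<phi>"
    and fin: "AE x in M. hphi M \<phi> 1 x < \<infinity>"
    and f: "f \<in> borel_measurable M"
  shows "is_cond_exp_phi M \<phi> f (cond_exp_phi M \<phi> f)"
proof -
  let ?F = "vimage_algebra (space M) \<phi> M"
  interpret s: sigma_finite_subalgebra M ?F by (rule vimage_sigma_finite[OF sf ns fin])
  have meas: "\<phi> \<in> measurable M M" using ns unfolding nonsingular_def by auto
  have "is_cond_exp_phi M \<phi> f (nn_cond_exp M ?F f)"
    unfolding is_cond_exp_phi_def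
  proof (intro conjI ballI)
    show "nn_cond_exp M ?F f \<in> borel_measurable ?F" by simp
    fix u :: "'a \<Rightarrow> ennreal" assume u: "u \<in> borel_measurable M"
    have um: "(\<lambda>x. u (\<phi> x)) \<in> borel_measurable ?F"
      using measurable_comp[OF measurable_vimage_algebra1 u] meas
      by (auto simp: measurable_def o_def)
    show "(\<integral>\<^sup>+ x. u (\<phi> x) * f x \<partial>M) = (\<integral>\<^sup>+ x. u (\<phi> x) * nn_cond_exp M ?F f x \<partial>M)"
      using s.nn_cond_exp_intg[OF um f] by simp
  qed
  then show ?thesis unfolding cond_exp_phi_def using someI[of "is_cond_exp_phi M \<phi> f"] by blast
qed



context
  fixes M :: "'a measure" and \<phi> :: "'a \<Rightarrow> 'a" and P :: "'a \<Rightarrow> real measure"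
  assumes sf: "sigma_finite_measure M"
    and ns: "nonsingular M \<phi>"
    and hyp: "AE x in M. 0 < hphi M \<phi> 1 x \<and> hphi M \<phi> 1 x < \<infinity>"
    and mpf: "measurable_prob_family M P"
    and CC: "\<forall>\<sigma>\<in>sets borel_Rplus. AE x in M.
               cond_exp_phi M \<phi> (\<lambda>y. emeasure (P y) \<sigma>) x =
               (\<integral>\<^sup>+ t. ennreal t * indicator \<sigma> t \<partial>(P (\<phi> x))) / hphi M \<phi> 1 (\<phi> x)"
begin

lemma phi_meas[measurable]: "\<phi> \<in> measurable M M"
  using ns unfolding nonsingular_def by auto

lemma P_sets: "x \<in> space M \<Longrightarrow> sets (P x) = sets borel_Rplus"
  using mpf unfolding measurable_prob_family_def by auto

lemma P_prob: "x \<in> space M \<Longrightarrow> prob_space (P x)"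
  using mpf unfolding measurable_prob_family_def by auto

lemma P_space: "x \<in> space M \<Longrightarrow> space (P x) = {0..}"
  using sets_eq_imp_space_eq[OF P_sets] by (simp add: space_restrict_space)

lemma P_meas_fun:
  fixes F :: "real \<Rightarrow> 'b::topological_space"
  assumes "x \<in> space M" "F \<in> borel_measurable borel_Rplus" shows "F \<in> borel_measurable (P x)"
proof -
  have "(P x \<rightarrow>\<^sub>M (borel :: 'b measure)) = (borel_Rplus \<rightarrow>\<^sub>M borel)"
    by (rule measurable_cong_sets[OF P_sets[OF assms(1)] refl])
  then show ?thesis using assms(2) by simp
qed

lemma id_Rplus[measurable]: "(\<lambda>x::real. x) \<in> borel_measurable borel_Rplus"
  by (rule measurable_restrict_space1) simp

lemma P_kernel: "P \<in> measurable M (subprob_algebra borel_Rplus)"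
  by (rule measurable_subprob_algebra)
    (use mpf in \<open>auto simp: measurable_prob_family_def prob_space_imp_subprob_space\<close>)

lemma kernel_int_meas:
  assumes "F \<in> borel_measurable borel_Rplus"
  shows "(\<lambda>x. \<integral>\<^sup>+ t. F t \<partial>P x) \<in> borel_measurable M"
  using measurable_comp[OF P_kernel nn_integral_measurable_subprob_algebra[OF assms]]
  by (simp add: o_def)

lemma key_K:
  assumes \<sigma>: "\<sigma> \<in> sets borel_Rplus" and u[measurable]: "u \<in> borel_measurable M"
  shows "(\<integral>\<^sup>+ x. u (\<phi> x) * emeasure (P x) \<sigma> \<partial>M) =
         (\<integral>\<^sup>+ y. u y * (\<integral>\<^sup>+ t. ennreal t * indicator \<sigma> t \<partial>P y) \<partial>M)"
proof -
  let ?h = "hphi M \<phi> 1"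
  define f where "f = (\<lambda>y. emeasure (P y) \<sigma>)"
  define I where "I = (\<lambda>y. \<integral>\<^sup>+ t. ennreal t * indicator \<sigma> t \<partial>P y)"
  define R where "R = (\<lambda>y. I y / ?h y)"
  have fm: "f \<in> borel_measurable M" using mpf \<sigma> unfolding f_def measurable_prob_family_def by auto
  have Fm: "(\<lambda>t. ennreal t * indicator \<sigma> t) \<in> borel_measurable borel_Rplus"
    using \<sigma> by (intro borel_measurable_times_ennreal measurable_compose[OF id_Rplus measurable_ennreal]
      borel_measurable_indicator)
  have Im[measurable]: "I \<in> borel_measurable M" unfolding I_def by (rule kernel_int_meas[OF Fm])
  have hm[measurable]: "?h \<in> borel_measurable M" by (simp add: hphi_def)
  have Rm[measurable]: "R \<in> borel_measurable M" unfolding R_def by measurable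
  have fin: "AE x in M. ?h x < \<infinity>" using hyp by auto
  have ce: "is_cond_exp_phi M \<phi> f (cond_exp_phi M \<phi> f)"
    by (rule cond_exp_phi_prop[OF sf ns fin fm])
  have "(\<integral>\<^sup>+ x. u (\<phi> x) * f x \<partial>M) = (\<integral>\<^sup>+ x. u (\<phi> x) * cond_exp_phi M \<phi> f x \<partial>M)"
    using ce u unfolding is_cond_exp_phi_def by auto
  also have "\<dots> = (\<integral>\<^sup>+ x. u (\<phi> x) * R (\<phi> x) \<partial>M)"
  proof (rule nn_integral_cong_AE)
    have "AE x in M. cond_exp_phi M \<phi> f x = R (\<phi> x)"
      using CC \<sigma> unfolding f_def R_def I_def by auto
    then show "AE x in M. u (\<phi> x) * cond_exp_phi M \<phi> f x = u (\<phi> x) * R (\<phi> x)" by auto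
  qed
  also have "\<dots> = (\<integral>\<^sup>+ y. ?h y * (u y * R y) \<partial>M)"
    using hphi1_int[OF sf ns, of "\<lambda>y. u y * R y"] by simp
  also have "\<dots> = (\<integral>\<^sup>+ y. u y * I y \<partial>M)"
  proof (rule nn_integral_cong_AE)
    show "AE y in M. ?h y * (u y * R y) = u y * I y"
      using hyp
    proof eventually_elim
      case (elim y)
      then have "?h y \<noteq> 0" "?h y \<noteq> top" by auto
      then have "?h y * (I y / ?h y) = I y"
        by (metis ennreal_times_divide ennreal_mult_divide_eq mult.commute)
      then show ?case unfolding R_def by (metis mult.left_commute)
    qed
  qed
  finally show ?thesis unfolding f_def I_def .
qed

lemma key_E:
  assumes F: "F \<in> borel_measurable borel_Rplus"
  shows "\<forall>u\<in>borel_measurable M. (\<integral>\<^sup>+ x. u (\<phi> x) * (\<integral>\<^sup>+ t. F t \<partial>P x) \<partial>M) =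
         (\<integral>\<^sup>+ y. u y * (\<integral>\<^sup>+ t. ennreal t * F t \<partial>P y) \<partial>M)"
  using F
proof (induct rule: borel_measurable_induct)
  case (cong f g)
  show ?case
  proof
    fix u :: "'a \<Rightarrow> ennreal" assume u[measurable]: "u \<in> borel_measurable M"
    have e1: "(\<integral>\<^sup>+ t. f t \<partial>P x) = (\<integral>\<^sup>+ t. g t \<partial>P x)" if "x \<in> space M" for x
      by (rule nn_integral_cong) (use cong(3) that P_space in auto)
    have e2: "(\<integral>\<^sup>+ t. ennreal t * f t \<partial>P x) = (\<integral>\<^sup>+ t. ennreal t * g t \<partial>P x)" if "x \<in> space M" for x
      by (rule nn_integral_cong) (use cong(3) that P_space in auto)
    have "(\<integral>\<^sup>+ x. u (\<phi> x) * (\<integral>\<^sup>+ t. f t \<partial>P x) \<partial>M) = (\<integral>\<^sup>+ x. u (\<phi> x) * (\<integral>\<^sup>+ t. g t \<partial>P x) \<partial>M)"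
      by (rule nn_integral_cong) (simp add: e1)
    also have "\<dots> = (\<integral>\<^sup>+ y. u y * (\<integral>\<^sup>+ t. ennreal t * g t \<partial>P y) \<partial>M)" using cong(4) u by auto
    also have "\<dots> = (\<integral>\<^sup>+ y. u y * (\<integral>\<^sup>+ t. ennreal t * f t \<partial>P y) \<partial>M)"
      by (rule nn_integral_cong) (simp add: e2)
    finally show "(\<integral>\<^sup>+ x. u (\<phi> x) * (\<integral>\<^sup>+ t. f t \<partial>P x) \<partial>M) = (\<integral>\<^sup>+ y. u y * (\<integral>\<^sup>+ t. ennreal t * f t \<partial>P y) \<partial>M)" .
  qed
next
  case (set A)
  show ?case
  proof
    fix u :: "'a \<Rightarrow> ennreal" assume u[measurable]: "u \<in> borel_measurable M"
    have e1: "(\<integral>\<^sup>+ t. indicator A t \<partial>P x) = emeasure (P x) A" if "x \<in> space M" for x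
      using set P_sets[OF that] by simp
    have "(\<integral>\<^sup>+ x. u (\<phi> x) * (\<integral>\<^sup>+ t. indicator A t \<partial>P x) \<partial>M) = (\<integral>\<^sup>+ x. u (\<phi> x) * emeasure (P x) A \<partial>M)"
      by (rule nn_integral_cong) (simp add: e1)
    also have "\<dots> = (\<integral>\<^sup>+ y. u y * (\<integral>\<^sup>+ t. ennreal t * indicator A t \<partial>P y) \<partial>M)"
      by (rule key_K[OF set u])
    finally show "(\<integral>\<^sup>+ x. u (\<phi> x) * (\<integral>\<^sup>+ t. indicator A t \<partial>P x) \<partial>M) = (\<integral>\<^sup>+ y. u y * (\<integral>\<^sup>+ t. ennreal t * indicator A t \<partial>P y) \<partial>M)" .
  qed
next
  case (mult v c)
  show ?case
  proof
    fix u :: "'a \<Rightarrow> ennreal" assume u[measurable]: "u \<in> borel_measurable M"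
    have e1: "(\<integral>\<^sup>+ t. c * v t \<partial>P x) = c * (\<integral>\<^sup>+ t. v t \<partial>P x)" if "x \<in> space M" for x
      by (rule nn_integral_cmult) (rule P_meas_fun[OF that mult(2)])
    have e2: "(\<integral>\<^sup>+ t. ennreal t * (c * v t) \<partial>P x) = c * (\<integral>\<^sup>+ t. ennreal t * v t \<partial>P x)" if "x \<in> space M" for x
    proof -
      have "(\<integral>\<^sup>+ t. ennreal t * (c * v t) \<partial>P x) = (\<integral>\<^sup>+ t. c * (ennreal t * v t) \<partial>P x)"
        by (simp add: mult.left_commute)
      also have "\<dots> = c * (\<integral>\<^sup>+ t. ennreal t * v t \<partial>P x)"
        by (rule nn_integral_cmult) (rule P_meas_fun[OF that],
          intro borel_measurable_times_ennreal measurable_compose[OF id_Rplus measurable_ennreal] mult(2))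
      finally show ?thesis .
    qed
    have cu: "(\<lambda>y. c * u y) \<in> borel_measurable M" by measurable
    have "(\<integral>\<^sup>+ x. u (\<phi> x) * (\<integral>\<^sup>+ t. c * v t \<partial>P x) \<partial>M) = (\<integral>\<^sup>+ x. (c * u (\<phi> x)) * (\<integral>\<^sup>+ t. v t \<partial>P x) \<partial>M)"
      by (rule nn_integral_cong) (simp add: e1 mult.left_commute mult.assoc)
    also have "\<dots> = (\<integral>\<^sup>+ y. (c * u y) * (\<integral>\<^sup>+ t. ennreal t * v t \<partial>P y) \<partial>M)"
      using mult(4) cu by auto
    also have "\<dots> = (\<integral>\<^sup>+ y. u y * (\<integral>\<^sup>+ t. ennreal t * (c * v t) \<partial>P y) \<partial>M)"
    proof (rule nn_integral_cong)
      fix x assume x: "x \<in> space M"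
      show "c * u x * (\<integral>\<^sup>+ t. ennreal t * v t \<partial>P x) = u x * (\<integral>\<^sup>+ t. ennreal t * (c * v t) \<partial>P x)"
        unfolding e2[OF x] by (simp add: ac_simps)
    qed
    finally show "(\<integral>\<^sup>+ x. u (\<phi> x) * (\<integral>\<^sup>+ t. c * v t \<partial>P x) \<partial>M) = (\<integral>\<^sup>+ y. u y * (\<integral>\<^sup>+ t. ennreal t * (c * v t) \<partial>P y) \<partial>M)" .
  qed
next
  case (add v w)
  show ?case
  proof
    fix u :: "'a \<Rightarrow> ennreal" assume u[measurable]: "u \<in> borel_measurable M"
    have tm: "(\<lambda>t. ennreal t * z t) \<in> borel_measurable borel_Rplus" if "z \<in> borel_measurable borel_Rplus" for z :: "real \<Rightarrow> ennreal"
      by (intro borel_measurable_times_ennreal measurable_compose[OF id_Rplus measurable_ennreal] that)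
    have e1: "(\<integral>\<^sup>+ t. w t + v t \<partial>P x) = (\<integral>\<^sup>+ t. w t \<partial>P x) + (\<integral>\<^sup>+ t. v t \<partial>P x)" if "x \<in> space M" for x
      by (rule nn_integral_add) (auto intro: P_meas_fun[OF that] add)
    have e2: "(\<integral>\<^sup>+ t. ennreal t * (w t + v t) \<partial>P x) = (\<integral>\<^sup>+ t. ennreal t * w t \<partial>P x) + (\<integral>\<^sup>+ t. ennreal t * v t \<partial>P x)" if "x \<in> space M" for x
      unfolding distrib_left
      by (rule nn_integral_add) (auto intro: P_meas_fun[OF that] tm add)
    have m1[measurable]: "(\<lambda>x. \<integral>\<^sup>+ t. w t \<partial>P x) \<in> borel_measurable M" by (rule kernel_int_meas) (rule add)
    have m2[measurable]: "(\<lambda>x. \<integral>\<^sup>+ t. v t \<partial>P x) \<in> borel_measurable M" by (rule kernel_int_meas) (rule add)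
    have m3[measurable]: "(\<lambda>x. \<integral>\<^sup>+ t. ennreal t * w t \<partial>P x) \<in> borel_measurable M" by (rule kernel_int_meas) (rule tm, rule add)
    have m4[measurable]: "(\<lambda>x. \<integral>\<^sup>+ t. ennreal t * v t \<partial>P x) \<in> borel_measurable M" by (rule kernel_int_meas) (rule tm, rule add)
    have "(\<integral>\<^sup>+ x. u (\<phi> x) * (\<integral>\<^sup>+ t. w t + v t \<partial>P x) \<partial>M) =
        (\<integral>\<^sup>+ x. u (\<phi> x) * (\<integral>\<^sup>+ t. w t \<partial>P x) + u (\<phi> x) * (\<integral>\<^sup>+ t. v t \<partial>P x) \<partial>M)"
      by (rule nn_integral_cong) (simp add: e1 distrib_left)
    also have "\<dots> = (\<integral>\<^sup>+ x. u (\<phi> x) * (\<integral>\<^sup>+ t. w t \<partial>P x) \<partial>M) + (\<integral>\<^sup>+ x. u (\<phi> x) * (\<integral>\<^sup>+ t. v t \<partial>P x) \<partial>M)"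
      by (rule nn_integral_add) measurable
    also have "\<dots> = (\<integral>\<^sup>+ y. u y * (\<integral>\<^sup>+ t. ennreal t * w t \<partial>P y) \<partial>M) + (\<integral>\<^sup>+ y. u y * (\<integral>\<^sup>+ t. ennreal t * v t \<partial>P y) \<partial>M)"
      using add(3) add(7) u by auto
    also have "\<dots> = (\<integral>\<^sup>+ y. u y * (\<integral>\<^sup>+ t. ennreal t * w t \<partial>P y) + u y * (\<integral>\<^sup>+ t. ennreal t * v t \<partial>P y) \<partial>M)"
      by (rule nn_integral_add[symmetric]) measurable
    also have "\<dots> = (\<integral>\<^sup>+ y. u y * (\<integral>\<^sup>+ t. ennreal t * (w t + v t) \<partial>P y) \<partial>M)"
    proof (rule nn_integral_cong)
      fix x assume x: "x \<in> space M"
      show "u x * (\<integral>\<^sup>+ t. ennreal t * w t \<partial>P x) + u x * (\<integral>\<^sup>+ t. ennreal t * v t \<partial>P x) = u x * (\<integral>\<^sup>+ t. ennreal t * (w t + v t) \<partial>P x)"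
        unfolding e2[OF x] by (simp add: distrib_left)
    qed
    finally show "(\<integral>\<^sup>+ x. u (\<phi> x) * (\<integral>\<^sup>+ t. w t + v t \<partial>P x) \<partial>M) = (\<integral>\<^sup>+ y. u y * (\<integral>\<^sup>+ t. ennreal t * (w t + v t) \<partial>P y) \<partial>M)" .
  qed
next
  case (seq U)
  show ?case
  proof
    fix u :: "'a \<Rightarrow> ennreal" assume u[measurable]: "u \<in> borel_measurable M"
    have tm: "(\<lambda>t. ennreal t * z t) \<in> borel_measurable borel_Rplus" if "z \<in> borel_measurable borel_Rplus" for z :: "real \<Rightarrow> ennreal"
      by (intro borel_measurable_times_ennreal measurable_compose[OF id_Rplus measurable_ennreal] that)
    define a where "a = (\<lambda>i x. \<integral>\<^sup>+ t. U i t \<partial>P x)"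
    define b where "b = (\<lambda>i x. \<integral>\<^sup>+ t. ennreal t * U i t \<partial>P x)"
    have am[measurable]: "a i \<in> borel_measurable M" for i unfolding a_def by (rule kernel_int_meas) (rule seq)
    have bm[measurable]: "b i \<in> borel_measurable M" for i unfolding b_def by (rule kernel_int_meas) (rule tm, rule seq)
    have Ui: "U i t \<le> U j t" if "i \<le> j" for i j t using seq(4) that by (auto simp: incseq_def le_fun_def)
    have ainc: "incseq (\<lambda>i x. u (\<phi> x) * a i x)"
      unfolding incseq_def le_fun_def a_def
      by (auto intro!: mult_left_mono nn_integral_mono Ui)
    have binc: "incseq (\<lambda>i x. u x * b i x)"
      unfolding incseq_def le_fun_def b_def
      by (auto intro!: mult_left_mono nn_integral_mono Ui)
    have e1: "(\<integral>\<^sup>+ t. (SUP i. U i) t \<partial>P x) = (SUP i. a i x)" if "x \<in> space M" for x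
      unfolding a_def SUP_apply
      by (rule nn_integral_monotone_convergence_SUP) (auto intro: P_meas_fun[OF that] seq)
    have e2: "(\<integral>\<^sup>+ t. ennreal t * (SUP i. U i) t \<partial>P x) = (SUP i. b i x)" if "x \<in> space M" for x
    proof -
      have "(\<integral>\<^sup>+ t. ennreal t * (SUP i. U i) t \<partial>P x) = (\<integral>\<^sup>+ t. (SUP i. ennreal t * U i t) \<partial>P x)"
        by (simp add: SUP_apply SUP_mult_left_ennreal image_comp)
      also have "\<dots> = (SUP i. b i x)"
        unfolding b_def
        by (rule nn_integral_monotone_convergence_SUP)
          (auto intro!: P_meas_fun[OF that] tm seq mult_left_mono Ui simp: incseq_def le_fun_def)
      finally show ?thesis .
    qed
    have "(\<integral>\<^sup>+ x. u (\<phi> x) * (\<integral>\<^sup>+ t. (SUP i. U i) t \<partial>P x) \<partial>M) = (\<integral>\<^sup>+ x. (SUP i. u (\<phi> x) * a i x) \<partial>M)"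
    proof (rule nn_integral_cong)
      fix x assume x: "x \<in> space M"
      show "u (\<phi> x) * (\<integral>\<^sup>+ t. (SUP i. U i) t \<partial>P x) = (SUP i. u (\<phi> x) * a i x)"
        unfolding e1[OF x] by (simp add: SUP_mult_left_ennreal)
    qed
    also have "\<dots> = (SUP i. \<integral>\<^sup>+ x. u (\<phi> x) * a i x \<partial>M)"
      by (rule nn_integral_monotone_convergence_SUP[OF ainc]) measurable
    also have "\<dots> = (SUP i. \<integral>\<^sup>+ x. u x * b i x \<partial>M)"
      using seq(3) u unfolding a_def b_def by auto
    also have "\<dots> = (\<integral>\<^sup>+ x. (SUP i. u x * b i x) \<partial>M)"
      by (rule nn_integral_monotone_convergence_SUP[OF binc, symmetric]) measurable
    also have "\<dots> = (\<integral>\<^sup>+ y. u y * (\<integral>\<^sup>+ t. ennreal t * (SUP i. U i) t \<partial>P y) \<partial>M)"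
    proof (rule nn_integral_cong)
      fix x assume x: "x \<in> space M"
      show "(SUP i. u x * b i x) = u x * (\<integral>\<^sup>+ t. ennreal t * (SUP i. U i) t \<partial>P x)"
        unfolding e2[OF x] by (simp add: SUP_mult_left_ennreal)
    qed
    finally show "(\<integral>\<^sup>+ x. u (\<phi> x) * (\<integral>\<^sup>+ t. (SUP i. U i) t \<partial>P x) \<partial>M) = (\<integral>\<^sup>+ y. u y * (\<integral>\<^sup>+ t. ennreal t * (SUP i. U i) t \<partial>P y) \<partial>M)" .
  qed
qed

lemma funpow_meas[measurable]: "(\<phi> ^^ n) \<in> measurable M M"
  by (induct n) (auto intro: measurable_comp[OF _ phi_meas] simp: o_def)

lemma powr_Rplus: "(\<lambda>t::real. t ^ n) \<in> borel_measurable borel_Rplus"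
  by (rule measurable_restrict_space1) simp

lemma pow_Rplus[measurable]: "(\<lambda>t::real. ennreal (t ^ n)) \<in> borel_measurable borel_Rplus"
  by measurable

lemma moment_int:
  "\<forall>u\<in>borel_measurable M. (\<integral>\<^sup>+ x. u ((\<phi> ^^ n) x) \<partial>M) = (\<integral>\<^sup>+ x. u x * (\<integral>\<^sup>+ t. ennreal (t ^ n) \<partial>P x) \<partial>M)"
proof (induct n)
  case 0
  show ?case
  proof
    fix u :: "'a \<Rightarrow> ennreal" assume u: "u \<in> borel_measurable M"
    show "(\<integral>\<^sup>+ x. u ((\<phi> ^^ 0) x) \<partial>M) = (\<integral>\<^sup>+ x. u x * (\<integral>\<^sup>+ t. ennreal (t ^ 0) \<partial>P x) \<partial>M)"
    proof (rule nn_integral_cong)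
      fix x assume x: "x \<in> space M"
      have "(\<integral>\<^sup>+ t. ennreal (t ^ 0) \<partial>P x) = 1"
        using prob_space.emeasure_space_1[OF P_prob[OF x]] by simp
      then show "u ((\<phi> ^^ 0) x) = u x * (\<integral>\<^sup>+ t. ennreal (t ^ 0) \<partial>P x)" by simp
    qed
  qed
next
  case (Suc n)
  show ?case
  proof
    fix u :: "'a \<Rightarrow> ennreal" assume u[measurable]: "u \<in> borel_measurable M"
    have uphi: "(\<lambda>y. u (\<phi> y)) \<in> borel_measurable M" by measurable
    have "(\<integral>\<^sup>+ x. u ((\<phi> ^^ Suc n) x) \<partial>M) = (\<integral>\<^sup>+ x. (\<lambda>y. u (\<phi> y)) ((\<phi> ^^ n) x) \<partial>M)" by simp
    also have "\<dots> = (\<integral>\<^sup>+ x. u (\<phi> x) * (\<integral>\<^sup>+ t. ennreal (t ^ n) \<partial>P x) \<partial>M)"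
      using bspec[OF Suc uphi] by simp
    also have "\<dots> = (\<integral>\<^sup>+ y. u y * (\<integral>\<^sup>+ t. ennreal t * ennreal (t ^ n) \<partial>P y) \<partial>M)"
      using key_E[OF pow_Rplus[of n]] u by blast
    also have "\<dots> = (\<integral>\<^sup>+ y. u y * (\<integral>\<^sup>+ t. ennreal (t ^ Suc n) \<partial>P y) \<partial>M)"
    proof (rule nn_integral_cong)
      fix y assume y: "y \<in> space M"
      have "(\<integral>\<^sup>+ t. ennreal t * ennreal (t ^ n) \<partial>P y) = (\<integral>\<^sup>+ t. ennreal (t ^ Suc n) \<partial>P y)"
        by (rule nn_integral_cong) (use P_space[OF y] in \<open>auto simp: ennreal_mult[symmetric]\<close>)
      then show "u y * (\<integral>\<^sup>+ t. ennreal t * ennreal (t ^ n) \<partial>P y) = u y * (\<integral>\<^sup>+ t. ennreal (t ^ Suc n) \<partial>P y)"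
        by simp
    qed
    finally show "(\<integral>\<^sup>+ x. u ((\<phi> ^^ Suc n) x) \<partial>M) = (\<integral>\<^sup>+ x. u x * (\<integral>\<^sup>+ t. ennreal (t ^ Suc n) \<partial>P x) \<partial>M)" .
  qed
qed

lemma moment_meas[measurable]: "(\<lambda>x. \<integral>\<^sup>+ t. ennreal (t ^ n) \<partial>P x) \<in> borel_measurable M"
  by (rule kernel_int_meas[OF pow_Rplus])

lemma moment_density: "density M (\<lambda>x. \<integral>\<^sup>+ t. ennreal (t ^ n) \<partial>P x) = distr M M (\<phi> ^^ n)"
proof (rule measure_eqI)
  show "sets (density M (\<lambda>x. \<integral>\<^sup>+ t. ennreal (t ^ n) \<partial>P x)) = sets (distr M M (\<phi> ^^ n))" by simp
  fix A assume "A \<in> sets (density M (\<lambda>x. \<integral>\<^sup>+ t. ennreal (t ^ n) \<partial>P x))"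
  then have A[measurable]: "A \<in> sets M" by simp
  have "emeasure (distr M M (\<phi> ^^ n)) A = (\<integral>\<^sup>+ x. indicator A x \<partial>distr M M (\<phi> ^^ n))"
    by simp
  also have "\<dots> = (\<integral>\<^sup>+ x. indicator A ((\<phi> ^^ n) x) \<partial>M)"
    by (rule nn_integral_distr) measurable
  also have "\<dots> = (\<integral>\<^sup>+ x. indicator A x * (\<integral>\<^sup>+ t. ennreal (t ^ n) \<partial>P x) \<partial>M)"
    using moment_int[of n] by simp
  also have "\<dots> = emeasure (density M (\<lambda>x. \<integral>\<^sup>+ t. ennreal (t ^ n) \<partial>P x)) A"
    by (simp add: emeasure_density mult.commute)
  finally show "emeasure (density M (\<lambda>x. \<integral>\<^sup>+ t. ennreal (t ^ n) \<partial>P x)) A = emeasure (distr M M (\<phi> ^^ n)) A" by simp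
qed

lemma part1: "AE x in M. hphi M \<phi> n x = (\<integral>\<^sup>+ t. ennreal (t ^ n) \<partial>P x)"
proof -
  have "AE x in M. (\<integral>\<^sup>+ t. ennreal (t ^ n) \<partial>P x) = RN_deriv M (distr M M (\<phi> ^^ n)) x"
    by (rule sigma_finite_measure.RN_deriv_unique[OF sf moment_meas moment_density])
  then show ?thesis unfolding hphi_def by eventually_elim simp
qed

lemma finite_moment:
  assumes dd: "Cphi_pow_densely_defined M \<phi> n"
  shows "AE x in M. (\<integral>\<^sup>+ t. ennreal (t ^ n) \<partial>P x) < \<infinity>"
proof (rule ccontr)
  define m where "m = (\<lambda>x. \<integral>\<^sup>+ t. ennreal (t ^ n) \<partial>P x)"
  have mm[measurable]: "m \<in> borel_measurable M" unfolding m_def by (rule moment_meas)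
  define A where "A = {x\<in>space M. \<not> m x < \<infinity>}"
  have As[measurable]: "A \<in> sets M" unfolding A_def by measurable
  assume "\<not> (AE x in M. (\<integral>\<^sup>+ t. ennreal (t ^ n) \<partial>P x) < \<infinity>)"
  then have A0: "emeasure M A \<noteq> 0"
    using AE_iff_measurable[OF As, of "\<lambda>x. m x < \<infinity>"] unfolding A_def m_def by auto
  obtain C where C: "countable C" "C \<subseteq> sets M" "\<Union>C = space M" "\<forall>c\<in>C. emeasure M c \<noteq> \<infinity>"
    using sigma_finite_measure.sigma_finite_countable[OF sf] by auto
  have "\<exists>c\<in>C. A \<inter> c \<notin> null_sets M"
  proof (rule ccontr)
    assume "\<not> ?thesis"
    then have "(\<Union>c\<in>C. A \<inter> c) \<in> null_sets M" by (intro null_sets_UN'[OF C(1)]) auto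
    moreover have "(\<Union>c\<in>C. A \<inter> c) = A" using C(3) sets.sets_into_space[OF As] by auto
    ultimately show False using A0 by auto
  qed
  then obtain c where c: "c \<in> C" "A \<inter> c \<notin> null_sets M" by auto
  define B where "B = A \<inter> c"
  have Bs[measurable]: "B \<in> sets M" unfolding B_def using c C(2) by auto
  have B0: "emeasure M B \<noteq> 0" using c Bs unfolding B_def by auto
  have Bfin: "emeasure M B < \<infinity>"
  proof -
    have "emeasure M B \<le> emeasure M c" using c C(2) by (intro emeasure_mono) (auto simp: B_def)
    also have "\<dots> < \<infinity>" using C(4) c by (simp add: less_top)
    finally show ?thesis .
  qed
  define g where "g = (\<lambda>x. complex_of_real (indicator B x))"
  have gm[measurable]: "g \<in> borel_measurable M" unfolding g_def by measurable
  have gsq: "(\<lambda>x. (norm (g x))\<^sup>2) = indicator B" unfolding g_def by (auto simp: indicator_def fun_eq_iff)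
  have intB: "integrable M (indicator B :: 'a \<Rightarrow> real)"
    using Bs Bfin by (simp add: integrable_indicator_iff sets.Int_space_eq2)
  have "sq_int M g" unfolding sq_int_def using gm intB gsq by simp
  have \<epsilon>: "measure M B > 0" unfolding measure_def using B0 Bfin by (simp add: enn2real_positive_iff zero_less_iff_neq_zero)
  obtain f where f: "f \<in> dom_Cphi_pow M \<phi> n" "(\<integral>x. (norm (f x - g x))\<^sup>2 \<partial>M) < measure M B"
    using dd \<open>sq_int M g\<close> \<epsilon> unfolding Cphi_pow_densely_defined_def by blast
  have fsq: "sq_int M f" and fnsq: "sq_int M (\<lambda>x. f ((\<phi> ^^ n) x))"
    using f(1) unfolding dom_Cphi_pow_def by auto
  have fm[measurable]: "f \<in> borel_measurable M" and fint: "integrable M (\<lambda>x. (norm (f x))\<^sup>2)"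
    using fsq unfolding sq_int_def by auto
  have "integrable M (\<lambda>x. (norm (f ((\<phi> ^^ n) x)))\<^sup>2)" using fnsq unfolding sq_int_def by auto
  then have "(\<integral>\<^sup>+ x. ennreal ((norm (f ((\<phi> ^^ n) x)))\<^sup>2) \<partial>M) < \<infinity>"
    by (simp add: integrable_iff_bounded)
  moreover have "(\<integral>\<^sup>+ x. ennreal ((norm (f ((\<phi> ^^ n) x)))\<^sup>2) \<partial>M) =
      (\<integral>\<^sup>+ x. ennreal ((norm (f x))\<^sup>2) * m x \<partial>M)"
    using moment_int[of n] unfolding m_def
    by (rule bspec[where x="\<lambda>x. ennreal ((norm (f x))\<^sup>2)", THEN subst]) (simp_all)
  ultimately have "AE x in M. ennreal ((norm (f x))\<^sup>2) * m x \<noteq> \<infinity>"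
    by (intro nn_integral_PInf_AE) auto
  then have AEf: "AE x in M. x \<in> B \<longrightarrow> f x = 0"
  proof eventually_elim
    case (elim x)
    show ?case
    proof
      assume "x \<in> B"
      then have "m x = \<infinity>" unfolding B_def A_def by (simp add: less_top[symmetric])
      then have "(norm (f x))\<^sup>2 = 0" using elim
        by (auto simp: ennreal_mult_eq_top_iff)
      then show "f x = 0" by simp
    qed
  qed
  have dint: "integrable M (\<lambda>x. (norm (f x - g x))\<^sup>2)"
  proof (rule Bochner_Integration.integrable_bound)
    show "integrable M (\<lambda>x. 2 * (norm (f x))\<^sup>2 + 2 * (norm (g x))\<^sup>2)"
    proof -
      have gi: "integrable M (\<lambda>x. (norm (g x))\<^sup>2)" unfolding gsq by (rule intB)
      have a: "integrable M (\<lambda>x. 2 * (norm (f x))\<^sup>2)" by (rule integrable_mult_right) (rule fint)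
      have b: "integrable M (\<lambda>x. 2 * (norm (g x))\<^sup>2)" by (rule integrable_mult_right) (rule gi)
      show ?thesis by (rule Bochner_Integration.integrable_add[OF a b])
    qed
    show "(\<lambda>x. (norm (f x - g x))\<^sup>2) \<in> borel_measurable M" by measurable
    show "AE x in M. norm ((norm (f x - g x))\<^sup>2) \<le> norm (2 * (norm (f x))\<^sup>2 + 2 * (norm (g x))\<^sup>2)"
    proof (rule AE_I2)
      fix x
      have t: "norm (f x - g x) \<le> norm (f x) + norm (g x)" by (rule norm_triangle_ineq4)
      have "(norm (f x - g x))\<^sup>2 \<le> (norm (f x) + norm (g x))\<^sup>2"
        using t by (intro power_mono) auto
      also have "\<dots> \<le> 2 * (norm (f x))\<^sup>2 + 2 * (norm (g x))\<^sup>2"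
        by (smt (verit, best) sum_squares_bound zero_le_power2 power2_sum)
      finally show "norm ((norm (f x - g x))\<^sup>2) \<le> norm (2 * (norm (f x))\<^sup>2 + 2 * (norm (g x))\<^sup>2)"
        by simp
    qed
  qed
  have "measure M B = (\<integral>x. indicator B x \<partial>M)" by simp
  also have "\<dots> \<le> (\<integral>x. (norm (f x - g x))\<^sup>2 \<partial>M)"
  proof (rule integral_mono_AE[OF intB dint])
    show "AE x in M. indicator B x \<le> (norm (f x - g x))\<^sup>2"
      using AEf by eventually_elim (auto simp: g_def indicator_def)
  qed
  finally show False using f(2) by simp
qed

end



theorem theorem17:
  fixes M :: "'a measure" and \<phi> :: "'a \<Rightarrow> 'a" and P :: "'a \<Rightarrow> real measure"
  assumes "sigma_finite_measure M"
    and "nonsingular M \<phi>"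
    and "AE x in M. 0 < hphi M \<phi> 1 x \<and> hphi M \<phi> 1 x < \<infinity>"
    and "measurable_prob_family M P"
    and CC: "\<forall>\<sigma>\<in>sets borel_Rplus. AE x in M.
               cond_exp_phi M \<phi> (\<lambda>y. emeasure (P y) \<sigma>) x =
               (\<integral>\<^sup>+ t. ennreal t * indicator \<sigma> t \<partial>(P (\<phi> x))) / hphi M \<phi> 1 (\<phi> x)"
  shows "(\<forall>n. AE x in M. hphi M \<phi> n x = (\<integral>\<^sup>+ t. ennreal (t ^ n) \<partial>(P x))) \<and>
         ((\<forall>n. Cphi_pow_densely_defined M \<phi> n) \<longrightarrow>
           (AE x in M. (\<forall>n. hphi M \<phi> n x < \<infinity>) \<and>
              stieltjes_moment_seq (\<lambda>n. enn2real (hphi M \<phi> n x)) (P x)))"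
proof -
  note facts = assms(1-4) CC
  have p1: "\<forall>n. AE x in M. hphi M \<phi> n x = (\<integral>\<^sup>+ t. ennreal (t ^ n) \<partial>(P x))"
    using part1[OF facts] by blast
  show ?thesis
  proof (intro conjI impI)
    show "\<forall>n. AE x in M. hphi M \<phi> n x = (\<integral>\<^sup>+ t. ennreal (t ^ n) \<partial>(P x))" by (rule p1)
    assume dd: "\<forall>n. Cphi_pow_densely_defined M \<phi> n"
    have A1: "AE x in M. \<forall>n. hphi M \<phi> n x = (\<integral>\<^sup>+ t. ennreal (t ^ n) \<partial>(P x))"
      using p1 by (simp add: AE_all_countable)
    have A2: "AE x in M. \<forall>n. (\<integral>\<^sup>+ t. ennreal (t ^ n) \<partial>(P x)) < \<infinity>"
      using finite_moment[OF facts] dd by (simp add: AE_all_countable)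
    show "AE x in M. (\<forall>n. hphi M \<phi> n x < \<infinity>) \<and>
              stieltjes_moment_seq (\<lambda>n. enn2real (hphi M \<phi> n x)) (P x)"
      using A1 A2 AE_space
    proof eventually_elim
      case (elim x)
      have x: "x \<in> space M" using elim by simp
      have sp: "space (P x) = {0..}" by (rule P_space[OF facts x])
      have nn: "AE s in P x. 0 \<le> s ^ n" for n
        by (rule AE_I2) (simp add: sp)
      have mf: "(\<lambda>s::real. s ^ n) \<in> borel_measurable (P x)" for n
        by (rule P_meas_fun[OF facts x powr_Rplus[OF facts]])
      have int: "integrable (P x) (\<lambda>s. s ^ n)" for n
        by (rule integrableI_nonneg[OF mf nn]) (use elim in auto)
      have eq: "enn2real (hphi M \<phi> n x) = (\<integral>s. s ^ n \<partial>P x)" for n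
      proof -
        have "hphi M \<phi> n x = ennreal (\<integral>s. s ^ n \<partial>P x)"
          using elim nn_integral_eq_integral[OF int nn] by simp
        moreover have "0 \<le> (\<integral>s. s ^ n \<partial>P x)" by (rule integral_nonneg_AE[OF nn])
        ultimately show ?thesis by simp
      qed
      show ?case
        unfolding stieltjes_moment_seq_def
        using elim P_sets[OF facts x] int eq by auto
    qed
  qed
qed

end
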